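(* If a topological space $X$ has an $\omega$-deep $\pi$-base, then $X\times\mathbb{Q}$ is $NWD$-separable.
   Context: A $\pi$-base $\mathcal{U}$ is $\omega$-deep if for every decreasing sequence $\{U_n\}_{n<\omega}\subseteq\mathcal{U}$ the set $\bigcap_{n<\omega}U_n$ has nonempty interior. $\mathbb{Q}$ carries its usual topology. A space $Y$ is $NWD$-separable if for every sequence $\{D_n:n<\omega\}$ of dense subsets of $Y$ there are nowhere dense sets $E_n\subseteq D_n$ such that $\bigcup_{n<\omega}E_n$ is dense in $Y$. *)

theory Defs
  imports "HOL-Analysis.Analysis"
begin

definition pi_base :: "'a topology \<Rightarrow> 'a set set \<Rightarrow> bool" where
  "pi_base X \<U> \<longleftrightarrow>
     (\<forall>U\<in>\<U>. openin X U \<and> U \<noteq> {}) \<and>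
     (\<forall>V. openin X V \<and> V \<noteq> {} \<longrightarrow> (\<exists>U\<in>\<U>. U \<subseteq> V))"

definition omega_deep :: "'a topology \<Rightarrow> 'a set set \<Rightarrow> bool" where
  "omega_deep X \<U> \<longleftrightarrow>
     (\<forall>U :: nat \<Rightarrow> 'a set. (\<forall>n. U n \<in> \<U>) \<and> (\<forall>n. U (Suc n) \<subseteq> U n)
        \<longrightarrow> X interior_of (\<Inter>n. U n) \<noteq> {})"

definition dense_set :: "'a topology \<Rightarrow> 'a set \<Rightarrow> bool" where
  "dense_set X D \<longleftrightarrow> D \<subseteq> topspace X \<and> X closure_of D = topspace X"

definition nowhere_dense :: "'a topology \<Rightarrow> 'a set \<Rightarrow> bool" where
  "nowhere_dense X E \<longleftrightarrow> E \<subseteq> topspace X \<and> X interior_of (X closure_of E) = {}"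

definition NWD_separable :: "'a topology \<Rightarrow> bool" where
  "NWD_separable Y \<longleftrightarrow>
     (\<forall>D :: nat \<Rightarrow> 'a set. (\<forall>n. dense_set Y (D n)) \<longrightarrow>
        (\<exists>E :: nat \<Rightarrow> 'a set. (\<forall>n. E n \<subseteq> D n \<and> nowhere_dense Y (E n))
            \<and> dense_set Y (\<Union>n. E n)))"

definition rat_topology :: "real topology" where
  "rat_topology = subtopology euclideanreal \<rat>"

end

theory Submission
  imports Defs
begin

lemma topspace_rat [simp]: "topspace rat_topology = \<rat>"
  by (simp add: rat_topology_def)

lemma rat_open_ball:
  assumes "openin rat_topology J" "q \<in> J"
  shows "\<exists>e>0. ball q e \<inter> \<rat> \<subseteq> J"
proof -
  obtain T where T: "open T" "J = T \<inter> \<rat>"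
    using assms(1) by (auto simp: rat_topology_def openin_subtopology)
  then obtain e where "e > 0" "ball q e \<subseteq> T"
    using assms(2) open_contains_ball by blast
  then show ?thesis using T by blast
qed

lemma openin_rat_ball: "openin rat_topology (ball c e \<inter> \<rat>)"
  by (auto simp: rat_topology_def openin_subtopology)

lemma rat_ball_infinite:
  fixes q e :: real
  assumes "e > 0" "q \<in> \<rat>"
  shows "infinite (ball q e \<inter> \<rat>)"
proof -
  obtain e' where e': "e' \<in> \<rat>" "0 < e'" "e' < e"
    using Rats_dense_in_real[OF assms(1)] by blast
  define f where "f n = q + e' / (real n + 1)" for n :: nat
  have "inj f"
    unfolding inj_def f_def using e' by (auto simp: field_simps)
  moreover have "range f \<subseteq> ball q e \<inter> \<rat>"
  proof
    fix y assume "y \<in> range f"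
    then obtain n where y: "y = f n" by blast
    have "e' / (real n + 1) \<le> e'" using e' by (simp add: divide_le_eq)
    moreover have "0 < e' / (real n + 1)" using e' by simp
    ultimately have "dist q y < e" using e' by (simp add: y f_def dist_real_def)
    moreover have "y \<in> \<rat>" using e' assms(2) by (simp add: y f_def)
    ultimately show "y \<in> ball q e \<inter> \<rat>" by simp
  qed
  ultimately show ?thesis
    using infinite_super range_inj_infinite by blast
qed

lemma rat_open_infinite:
  assumes "openin rat_topology J" "J \<noteq> {}"
  shows "infinite J"
proof -
  obtain q where q: "q \<in> J" using assms(2) by blast
  have "q \<in> \<rat>" using openin_subset[OF assms(1)] q by auto
  obtain e where "e > 0" "ball q e \<inter> \<rat> \<subseteq> J"
    using rat_open_ball[OF assms(1) q] by blast
  then show ?thesis using rat_ball_infinite[OF \<open>e>0\<close> \<open>q\<in>\<rat>\<close>] infinite_super by blast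
qed

lemma dense_piece:
  fixes A :: "nat \<Rightarrow> 'a set"
  assumes Asub: "\<And>k. A k \<subseteq> topspace X"
  defines "B \<equiv> \<lambda>k. A k - X closure_of (\<Union>j<k. A j)"
  shows "A k \<subseteq> X closure_of (\<Union>k. B k)"
proof (induction k rule: less_induct)
  case (less k)
  let ?C = "X closure_of (\<Union>k. B k)"
  have Bsub: "(\<Union>k. B k) \<subseteq> topspace X" using Asub by (auto simp: B_def)
  have "B k \<subseteq> ?C" using closure_of_subset[OF Bsub] by blast
  moreover have "(\<Union>j<k. A j) \<subseteq> ?C" using less by blast
  then have "X closure_of (\<Union>j<k. A j) \<subseteq> ?C"
    by (metis closure_of_closure_of closure_of_mono)
  ultimately show ?case by (auto simp: B_def)
qed

lemma nwd_piece:
  fixes A :: "nat \<Rightarrow> 'a set"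
  assumes pb: "pi_base X \<U>" and od: "omega_deep X \<U>"
  and qe: "range qe = \<rat>"
  and Asub: "\<And>k. A k \<subseteq> topspace X"
  defines "B \<equiv> \<lambda>k. A k - X closure_of (\<Union>j<k. A j)"
  shows "nowhere_dense (prod_topology X rat_topology) (\<Union>k. B k \<times> {qe k})"
proof -
  let ?Y = "prod_topology X rat_topology"
  let ?E = "\<Union>k. B k \<times> {qe k}"
  have Bsub: "B k \<subseteq> topspace X" for k using Asub by (auto simp: B_def)
  have Esub: "?E \<subseteq> topspace ?Y" using Bsub qe by auto
  have "?Y interior_of (?Y closure_of ?E) = {}"
    unfolding interior_of_eq_empty
  proof (intro allI impI, rule ccontr)
    fix T assume T: "openin ?Y T \<and> T \<subseteq> ?Y closure_of ?E" and "T \<noteq> {}"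
    then obtain x0 q0 where z: "(x0,q0) \<in> T" by auto
    then obtain V J where VJ: "openin X V" "openin rat_topology J" "x0 \<in> V" "q0 \<in> J"
      "V \<times> J \<subseteq> T"
      using T openin_prod_topology_alt by metis
    have box: "\<exists>y k. y \<in> W \<and> y \<in> B k \<and> qe k \<in> J'"
      if "openin X W" "openin rat_topology J'" "x \<in> W" "q \<in> J'" "W \<subseteq> V" "J' \<subseteq> J" for W J' x q
    proof -
      have "(x,q) \<in> ?Y closure_of ?E" using T VJ that by blast
      moreover have "openin ?Y (W \<times> J')" using that by (simp add: openin_prod_Times_iff)
      ultimately have "\<exists>y. y \<in> ?E \<and> y \<in> W \<times> J'"
        using that(3,4) unfolding in_closure_of by (meson mem_Sigma_iff)
      then obtain y k where "y \<in> B k \<times> {qe k}" "y \<in> W \<times> J'" by blast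
      then show ?thesis by (intro exI[of _ "fst y"] exI[of _ k]) auto
    qed
    have stepa: "\<not> U \<subseteq> X closure_of (B k)"
      if U: "openin X U" "U \<noteq> {}" "U \<subseteq> V" for U k
    proof
      assume Ucl: "U \<subseteq> X closure_of (B k)"
      define F where "F = qe ` {..k}"
      have "finite F" by (simp add: F_def)
      have "F \<subseteq> \<rat>" using qe by (auto simp: F_def)
      have Fcl: "closedin rat_topology F"
        unfolding rat_topology_def closedin_subtopology
        using finite_imp_closed[OF \<open>finite F\<close>] \<open>F \<subseteq> \<rat>\<close>
        by (intro exI[of _ F]) auto
      have J'o: "openin rat_topology (J - F)" using VJ(2) Fcl by (rule openin_diff)
      have "infinite J" using rat_open_infinite VJ by blast
      then obtain q where q: "q \<in> J - F"
        using \<open>finite F\<close> by (metis Diff_infinite_finite ex_in_conv finite.emptyI)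
      obtain x where x: "x \<in> U" using U by blast
      obtain y j where y: "y \<in> U" "y \<in> B j" "qe j \<in> J - F"
        using box[OF U(1) J'o x q U(3)] by blast
      have "k < j" using y(3) by (auto simp: F_def)
      then have "B k \<subseteq> (\<Union>i<j. A i)" by (auto simp: B_def)
      then have "X closure_of (B k) \<subseteq> X closure_of (\<Union>i<j. A i)" by (rule closure_of_mono)
      then show False using y Ucl by (auto simp: B_def)
    qed
    have stepb: "\<exists>U'\<in>\<U>. U' \<subseteq> U \<and> U' \<inter> B k = {}" if U: "U \<in> \<U>" "U \<subseteq> V" for U k
    proof -
      have Uo: "openin X U" "U \<noteq> {}" using pb U unfolding pi_base_def by auto
      have "openin X (U - X closure_of (B k))" using Uo by (simp add: openin_diff)
      moreover have "U - X closure_of (B k) \<noteq> {}" using stepa[OF Uo U(2)] by blast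
      ultimately obtain U' where "U' \<in> \<U>" "U' \<subseteq> U - X closure_of (B k)"
        using pb unfolding pi_base_def by blast
      moreover have "B k \<subseteq> X closure_of (B k)" using closure_of_subset[OF Bsub] .
      ultimately show ?thesis by blast
    qed
    have "V \<noteq> {}" using VJ by blast
    then obtain U0 where U0: "U0 \<in> \<U>" "U0 \<subseteq> V" using pb VJ(1) unfolding pi_base_def by blast
    have "\<forall>U k. \<exists>U'. U \<in> \<U> \<and> U \<subseteq> V \<longrightarrow> U' \<in> \<U> \<and> U' \<subseteq> U \<and> U' \<inter> B k = {}"
      using stepb by blast
    then obtain f where f: "\<And>U k. U \<in> \<U> \<Longrightarrow> U \<subseteq> V \<Longrightarrow> f U k \<in> \<U> \<and> f U k \<subseteq> U \<and> f U k \<inter> B k = {}"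
      by metis
    define S where "S = rec_nat U0 (\<lambda>k Sk. f Sk k)"
    have S0: "S 0 = U0" and SS: "S (Suc k) = f (S k) k" for k by (simp_all add: S_def)
    have Sk: "S k \<in> \<U> \<and> S k \<subseteq> V" for k
    proof (induction k)
      case 0 then show ?case using U0 S0 by simp
    next
      case (Suc k)
      have "f (S k) k \<in> \<U> \<and> f (S k) k \<subseteq> S k"
        using f[OF conjunct1[OF Suc] conjunct2[OF Suc], of k] by simp
      then show ?case unfolding SS using Suc by blast
    qed
    have fk: "f (S k) k \<in> \<U> \<and> f (S k) k \<subseteq> S k \<and> f (S k) k \<inter> B k = {}" for k
      using f[OF conjunct1[OF Sk] conjunct2[OF Sk], of k] by simp
    have dec: "S (Suc k) \<subseteq> S k" for k unfolding SS using fk by simp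
    have miss: "S (Suc k) \<inter> B k = {}" for k unfolding SS using fk by simp
    define W where "W = X interior_of (\<Inter>k. S k)"
    have "W \<noteq> {}" using od Sk dec unfolding omega_deep_def W_def by blast
    then obtain x where x: "x \<in> W" by blast
    have Wo: "openin X W" by (simp add: W_def)
    have WS: "W \<subseteq> S k" for k using interior_of_subset[of X "\<Inter>k. S k"] unfolding W_def by blast
    have "W \<subseteq> V" using WS[of 0] Sk[of 0] by blast
    then obtain y k where "y \<in> W" "y \<in> B k" "qe k \<in> J"
      using box[OF Wo VJ(2) x VJ(4)] by blast
    then show False using WS[of "Suc k"] miss[of k] by blast
  qed
  then show ?thesis unfolding nowhere_dense_def using Esub by blast
qed

theorem lemma4p2:
  fixes X :: "'a topology"
  assumes "\<exists>\<U>. pi_base X \<U> \<and> omega_deep X \<U>"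
  shows "NWD_separable (prod_topology X rat_topology)"
proof -
  obtain \<U> where pb: "pi_base X \<U>" and od: "omega_deep X \<U>" using assms by blast
  let ?Y = "prod_topology X rat_topology"
  define qe where "qe = from_nat_into (\<rat>::real set)"
  have qe: "range qe = \<rat>" unfolding qe_def
    using range_from_nat_into[OF _ countable_rat] Rats_0 by blast
  show ?thesis unfolding NWD_separable_def
  proof (intro allI impI)
    fix D :: "nat \<Rightarrow> ('a \<times> real) set"
    assume Dd: "\<forall>n. dense_set ?Y (D n)"
    define cen where "cen n = qe (fst (prod_decode n))" for n
    define rad where "rad n = inverse (real (Suc (snd (prod_decode n))))" for n
    define A where "A n k = {x \<in> topspace X. (x, qe k) \<in> D n \<and> qe k \<in> ball (cen n) (rad n)}" for n k
    define B where "B n = (\<lambda>k. A n k - X closure_of (\<Union>j<k. A n j))" for n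
    define E where "E n = (\<Union>k. B n k \<times> {qe k})" for n
    have Asub: "A n k \<subseteq> topspace X" for n k by (auto simp: A_def)
    have nwd: "nowhere_dense ?Y (E n)" for n
      unfolding E_def B_def using nwd_piece[OF pb od qe Asub] .
    have ED: "E n \<subseteq> D n" for n by (auto simp: E_def B_def A_def)
    have ABcl: "A n k \<subseteq> X closure_of (\<Union>k. B n k)" for n k
      unfolding B_def using dense_piece[OF Asub] .
    have Esub: "(\<Union>n. E n) \<subseteq> topspace ?Y"
      using nwd unfolding nowhere_dense_def by blast
    have "?Y closure_of (\<Union>n. E n) = topspace ?Y"
      unfolding dense_intersects_open
    proof (intro allI impI)
      fix T assume T: "openin ?Y T \<and> T \<noteq> {}"
      then obtain x0 q0 where z: "(x0,q0) \<in> T" by auto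
      then obtain V J where VJ: "openin X V" "openin rat_topology J" "x0 \<in> V" "q0 \<in> J"
        "V \<times> J \<subseteq> T"
        using T openin_prod_topology_alt by metis
      have q0Q: "q0 \<in> \<rat>" using openin_subset[OF VJ(2)] VJ(4) by auto
      obtain e where e: "e > 0" "ball q0 e \<inter> \<rat> \<subseteq> J" using rat_open_ball[OF VJ(2,4)] by blast
      obtain m where m: "inverse (real (Suc m)) < e" using reals_Archimedean[OF e(1)] by blast
      obtain a where a: "qe a = q0" using q0Q unfolding qe[symmetric] by blast
      define n where "n = prod_encode (a, m)"
      have cn: "cen n = q0" and rn: "rad n = inverse (real (Suc m))"
        by (simp_all add: n_def cen_def rad_def a)
      have rpos: "rad n > 0" using rn by simp
      have "openin ?Y (V \<times> (ball q0 (rad n) \<inter> \<rat>))"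
        using VJ(1) openin_rat_ball by (simp add: openin_prod_Times_iff)
      moreover have "(x0, q0) \<in> V \<times> (ball q0 (rad n) \<inter> \<rat>)" using VJ(3) q0Q rpos by simp
      ultimately have "D n \<inter> (V \<times> (ball q0 (rad n) \<inter> \<rat>)) \<noteq> {}"
        using Dd unfolding dense_set_def dense_intersects_open by blast
      then obtain x q where xq: "(x,q) \<in> D n" "x \<in> V" "q \<in> ball q0 (rad n)" "q \<in> \<rat>" by auto
      obtain k where k: "qe k = q" using xq(4) unfolding qe[symmetric] by blast
      have "x \<in> topspace X" using Dd xq(1) unfolding dense_set_def by auto
      then have "x \<in> A n k" using xq k cn by (simp add: A_def)
      then have "x \<in> X closure_of (\<Union>k. B n k)" using ABcl by blast
      then obtain y where y: "y \<in> (\<Union>k. B n k)" "y \<in> V"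
        using VJ(1,3) xq(2) unfolding in_closure_of by blast
      then obtain j where j: "y \<in> B n j" by blast
      then have "qe j \<in> ball q0 (rad n)" by (simp add: B_def A_def cn)
      then have "qe j \<in> ball q0 e" using m rn by (simp add: dist_real_def)
      moreover have "qe j \<in> \<rat>" using qe by blast
      ultimately have "qe j \<in> J" using e(2) by blast
      then have "(y, qe j) \<in> T" using VJ(5) y(2) by blast
      moreover have "(y, qe j) \<in> E n" using j by (auto simp: E_def)
      ultimately show "(\<Union>n. E n) \<inter> T \<noteq> {}" by blast
    qed
    then have "dense_set ?Y (\<Union>n. E n)" using Esub by (simp add: dense_set_def)
    then show "\<exists>E. (\<forall>n. E n \<subseteq> D n \<and> nowhere_dense ?Y (E n)) \<and> dense_set ?Y (\<Union>n. E n)"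
      using ED nwd by blast
  qed
qed

end
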